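(* If $\Lambda$ is a (non-degenerate) real interval, then no PAF $\psi:\mathcal P^N\to\mathcal P$ that is Level-SP and unanimous satisfies diversity.
   Context: Let $N=\{1,\dots,n\}$, $\mathcal P$ the Borel probability measures on $\Lambda$, $\mathcal C$ the CDFs on $\Lambda$, $\pi(p)(a)=p(\{x\in\Lambda:x\le a\})$. A PAF is a map $\psi:\mathcal P^N\to\mathcal P$ with associated CAF $\Psi$ given by $\Psi(\pi(p_1),\dots,\pi(p_n))=\pi(\psi(p_1,\dots,p_n))$; $P_i=\pi(p_i)$. $\mathbf z_{-i}(z_i')$ is $\mathbf z$ with $i$-th coordinate replaced by $z_i'$. $\psi$ is Level-SP if for every $i$, $\mathbf P$, $P_i'$, $a$: $P_i(a)<\Psi(\mathbf P)(a)\Rightarrow\Psi(\mathbf P)(a)\le\Psi(\mathbf P_{-i}(P_i'))(a)$ and $P_i(a)>\Psi(\mathbf P)(a)\Rightarrow\Psi(\mathbf P)(a)\ge\Psi(\mathbf P_{-i}(P_i'))(a)$. $\psi$ is unanimous if $\psi(p,\dots,p)=p$. $\psi$ satisfies diversity if for every profile $\mathbf p$, the support of $\psi(\mathbf p)$ contains the union of the supports of $p_1,\dots,p_n$. *)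

theory Defs
  imports "HOL-Probability.Probability" "HOL-Library.FuncSet"
begin

definition prob_measures :: "real set \<Rightarrow> real measure set" where
  "prob_measures \<Lambda> = {p. prob_space p \<and> sets p = sets (restrict_space borel \<Lambda>)}"

definition cdf_of :: "real set \<Rightarrow> real measure \<Rightarrow> real \<Rightarrow> real" where
  "cdf_of \<Lambda> p a = measure p {x \<in> \<Lambda>. x \<le> a}"

definition supp :: "real set \<Rightarrow> real measure \<Rightarrow> real set" where
  "supp \<Lambda> p = {x \<in> \<Lambda>. \<forall>e>0. 0 < measure p (ball x e \<inter> \<Lambda>)}"

definition profiles :: "nat \<Rightarrow> real set \<Rightarrow> (nat \<Rightarrow> real measure) set" where
  "profiles n \<Lambda> = PiE {1..n} (\<lambda>_. prob_measures \<Lambda>)"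

definition is_PAF :: "nat \<Rightarrow> real set \<Rightarrow> ((nat \<Rightarrow> real measure) \<Rightarrow> real measure) \<Rightarrow> bool" where
  "is_PAF n \<Lambda> \<psi> \<longleftrightarrow> (\<forall>p\<in>profiles n \<Lambda>. \<psi> p \<in> prob_measures \<Lambda>)"

definition level_SP :: "nat \<Rightarrow> real set \<Rightarrow> ((nat \<Rightarrow> real measure) \<Rightarrow> real measure) \<Rightarrow> bool" where
  "level_SP n \<Lambda> \<psi> \<longleftrightarrow>
    (\<forall>p\<in>profiles n \<Lambda>. \<forall>i\<in>{1..n}. \<forall>q\<in>prob_measures \<Lambda>. \<forall>a\<in>\<Lambda>.
      (cdf_of \<Lambda> (p i) a < cdf_of \<Lambda> (\<psi> p) a \<longrightarrow>
          cdf_of \<Lambda> (\<psi> p) a \<le> cdf_of \<Lambda> (\<psi> (p(i := q))) a) \<and>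
      (cdf_of \<Lambda> (p i) a > cdf_of \<Lambda> (\<psi> p) a \<longrightarrow>
          cdf_of \<Lambda> (\<psi> p) a \<ge> cdf_of \<Lambda> (\<psi> (p(i := q))) a))"

definition unanimous :: "nat \<Rightarrow> real set \<Rightarrow> ((nat \<Rightarrow> real measure) \<Rightarrow> real measure) \<Rightarrow> bool" where
  "unanimous n \<Lambda> \<psi> \<longleftrightarrow> (\<forall>q\<in>prob_measures \<Lambda>. \<psi> (\<lambda>i\<in>{1..n}. q) = q)"

definition diversity :: "nat \<Rightarrow> real set \<Rightarrow> ((nat \<Rightarrow> real measure) \<Rightarrow> real measure) \<Rightarrow> bool" where
  "diversity n \<Lambda> \<psi> \<longleftrightarrow>
    (\<forall>p\<in>profiles n \<Lambda>. (\<Union>i\<in>{1..n}. supp \<Lambda> (p i)) \<subseteq> supp \<Lambda> (\<psi> p))"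

end

theory Submission imports Defs begin

definition mixm :: "real set \<Rightarrow> real \<Rightarrow> real \<Rightarrow> real \<Rightarrow> real measure" where
 "mixm \<Lambda> s u v = distr (measure_pmf (map_pmf (\<lambda>b. if b then u else v) (bernoulli_pmf s)))
     (restrict_space borel \<Lambda>) (\<lambda>x. if x \<in> \<Lambda> then x else u)"

lemma mix_in: assumes "u \<in> \<Lambda>" "0 \<le> s" "s \<le> 1" shows "mixm \<Lambda> s u v \<in> prob_measures \<Lambda>"
  unfolding prob_measures_def mixm_def
proof (intro CollectI conjI)
  show "prob_space (distr (measure_pmf (map_pmf (\<lambda>b. if b then u else v) (bernoulli_pmf s)))
     (restrict_space borel \<Lambda>) (\<lambda>x. if x \<in> \<Lambda> then x else u))"
    apply (rule prob_space.prob_space_distr)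
     apply (rule prob_space_measure_pmf)
    using assms by (auto simp: space_restrict_space)
qed simp

lemma sets_L: "A \<in> sets borel \<Longrightarrow> A \<inter> \<Lambda> \<in> sets (restrict_space borel \<Lambda>)"
  by (auto simp: sets_restrict_space)

lemma mix_measure: assumes "A \<in> sets (restrict_space borel \<Lambda>)" "u \<in> \<Lambda>" "v \<in> \<Lambda>" "u \<noteq> v" "0 \<le> s" "s \<le> 1"
  shows "measure (mixm \<Lambda> s u v) A = (if u \<in> A then s else 0) + (if v \<in> A then 1 - s else 0)"
proof -
  have m: "(\<lambda>x. if x \<in> \<Lambda> then x else u) \<in> measurable (measure_pmf (map_pmf (\<lambda>b. if b then u else v) (bernoulli_pmf s))) (restrict_space borel \<Lambda>)"
    using assms by (auto simp: space_restrict_space)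
  have "measure (mixm \<Lambda> s u v) A = measure (measure_pmf (bernoulli_pmf s)) ((\<lambda>b. if b then u else v) -` ((\<lambda>x. if x \<in> \<Lambda> then x else u) -` A))"
    unfolding mixm_def using measure_distr[OF m assms(1)] by simp
  also have "\<dots> = sum (pmf (bernoulli_pmf s)) ((\<lambda>b. if b then u else v) -` ((\<lambda>x. if x \<in> \<Lambda> then x else u) -` A))"
    by (rule measure_measure_pmf_finite) simp
  also have "\<dots> = (if u \<in> A then s else 0) + (if v \<in> A then 1 - s else 0)"
  proof -
    have e: "((\<lambda>b. if b then u else v) -` ((\<lambda>x. if x \<in> \<Lambda> then x else u) -` A)) = 
      (if u \<in> A then {True} else {}) \<union> (if v \<in> A then {False} else {})"
      using assms(2,3) by (auto split: if_splits)
    show ?thesis unfolding e using assms by (auto split: if_splits)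
  qed
  finally show ?thesis .
qed


lemma profiles_upd: "p \<in> profiles n \<Lambda> \<Longrightarrow> i \<in> {1..n} \<Longrightarrow> q \<in> prob_measures \<Lambda> \<Longrightarrow> p(i := q) \<in> profiles n \<Lambda>"
  unfolding profiles_def by (metis PiE_fun_upd insert_absorb)

lemma L1:
  assumes SP: "level_SP n \<Lambda> \<psi>" and p: "p \<in> profiles n \<Lambda>" and i: "i \<in> {1..n}"
    and q: "q \<in> prob_measures \<Lambda>" and x: "x \<in> \<Lambda>" and eq: "cdf_of \<Lambda> (p i) x = cdf_of \<Lambda> q x"
  shows "cdf_of \<Lambda> (\<psi> p) x = cdf_of \<Lambda> (\<psi> (p(i:=q))) x"
proof -
  have p': "p(i:=q) \<in> profiles n \<Lambda>" using profiles_upd[OF p i q] .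
  have pim: "p i \<in> prob_measures \<Lambda>" using p i unfolding profiles_def by auto
  have bk: "(p(i:=q))(i := p i) = p" by simp
  have 1: "(cdf_of \<Lambda> (p i) x < cdf_of \<Lambda> (\<psi> p) x \<longrightarrow>
          cdf_of \<Lambda> (\<psi> p) x \<le> cdf_of \<Lambda> (\<psi> (p(i := q))) x) \<and>
      (cdf_of \<Lambda> (p i) x > cdf_of \<Lambda> (\<psi> p) x \<longrightarrow>
          cdf_of \<Lambda> (\<psi> p) x \<ge> cdf_of \<Lambda> (\<psi> (p(i := q))) x)"
    using SP p i q x unfolding level_SP_def by blast
  have 2: "(cdf_of \<Lambda> ((p(i:=q)) i) x < cdf_of \<Lambda> (\<psi> (p(i:=q))) x \<longrightarrow>
          cdf_of \<Lambda> (\<psi> (p(i:=q))) x \<le> cdf_of \<Lambda> (\<psi> ((p(i:=q))(i := p i))) x) \<and>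
      (cdf_of \<Lambda> ((p(i:=q)) i) x > cdf_of \<Lambda> (\<psi> (p(i:=q))) x \<longrightarrow>
          cdf_of \<Lambda> (\<psi> (p(i:=q))) x \<ge> cdf_of \<Lambda> (\<psi> ((p(i:=q))(i := p i))) x)"
    using SP p' i pim x unfolding level_SP_def by blast
  from 1 2 eq show ?thesis unfolding bk by auto
qed

lemma chain:
  assumes SP: "level_SP n \<Lambda> \<psi>" and p: "p \<in> profiles n \<Lambda>" and p': "p' \<in> profiles n \<Lambda>"
    and x: "x \<in> \<Lambda>" and eq: "\<forall>i\<in>{1..n}. cdf_of \<Lambda> (p i) x = cdf_of \<Lambda> (p' i) x"
  shows "cdf_of \<Lambda> (\<psi> p) x = cdf_of \<Lambda> (\<psi> p') x"
proof -
  define h where "h k = (\<lambda>i\<in>{1..n}. if i \<le> k then p' i else p i)" for k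
  have hp: "h k \<in> profiles n \<Lambda>" for k
    using p p' unfolding h_def profiles_def by (auto simp: PiE_iff)
  have "cdf_of \<Lambda> (\<psi> (h k)) x = cdf_of \<Lambda> (\<psi> p) x" for k
  proof (induction k)
    case 0
    have "h 0 = p" using p unfolding h_def profiles_def by (auto simp: PiE_def extensional_def)
    then show ?case by simp
  next
    case (Suc k)
    show ?case
    proof (cases "Suc k \<le> n")
      case True
      then have i: "Suc k \<in> {1..n}" by auto
      have hs: "h (Suc k) = (h k)(Suc k := p' (Suc k))" unfolding h_def using True by (auto simp: fun_eq_iff)
      have q: "p' (Suc k) \<in> prob_measures \<Lambda>" using p' i unfolding profiles_def by auto
      have "h k (Suc k) = p (Suc k)" unfolding h_def using i by auto
      then have "cdf_of \<Lambda> (h k (Suc k)) x = cdf_of \<Lambda> (p' (Suc k)) x" using eq i by auto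
      from L1[OF SP hp i q x this] Suc show ?thesis unfolding hs by (simp only:)
    next
      case False
      then have "h (Suc k) = h k" unfolding h_def by (auto simp: fun_eq_iff)
      then show ?thesis using Suc by simp
    qed
  qed
  moreover have "h n = p'" using p' unfolding h_def profiles_def by (auto simp: PiE_def extensional_def fun_eq_iff)
  ultimately show ?thesis by metis
qed

lemma mix_cdf: assumes "u \<in> \<Lambda>" "v \<in> \<Lambda>" "u \<noteq> v" "0 \<le> s" "s \<le> 1"
  shows "cdf_of \<Lambda> (mixm \<Lambda> s u v) x = (if u \<le> x then s else 0) + (if v \<le> x then 1 - s else 0)"
proof -
  have "{y \<in> \<Lambda>. y \<le> x} = {..x} \<inter> \<Lambda>" by auto
  then have "{y \<in> \<Lambda>. y \<le> x} \<in> sets (restrict_space borel \<Lambda>)" using sets_L[of "{..x}" \<Lambda>] by simp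
  from mix_measure[OF this assms] show ?thesis using assms unfolding cdf_of_def by simp
qed

theorem mainTheorem15:
  fixes \<Lambda> :: "real set" and n :: nat
  assumes "is_interval \<Lambda>" and "\<exists>a\<in>\<Lambda>. \<exists>b\<in>\<Lambda>. a < b" and "n \<ge> 2"
  shows "\<not> (\<exists>\<psi>. is_PAF n \<Lambda> \<psi> \<and> level_SP n \<Lambda> \<psi> \<and> unanimous n \<Lambda> \<psi> \<and> diversity n \<Lambda> \<psi>)"
proof
  assume "\<exists>\<psi>. is_PAF n \<Lambda> \<psi> \<and> level_SP n \<Lambda> \<psi> \<and> unanimous n \<Lambda> \<psi> \<and> diversity n \<Lambda> \<psi>"
  then obtain \<psi> where PAF: "is_PAF n \<Lambda> \<psi>" and SP: "level_SP n \<Lambda> \<psi>"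
    and UN: "unanimous n \<Lambda> \<psi>" and DIV: "diversity n \<Lambda> \<psi>" by blast
  obtain a b where ab: "a \<in> \<Lambda>" "b \<in> \<Lambda>" "a < b" using assms(2) by blast
  have intv: "\<And>x. a \<le> x \<Longrightarrow> x \<le> b \<Longrightarrow> x \<in> \<Lambda>" using assms(1) ab unfolding is_interval_1 by blast
  define y where "y = (3*a + b)/4"
  define c where "c = (a + b)/2"
  define e where "e = (b - a)/8"
  define z where "z = c + e"
  have yL: "y \<in> \<Lambda>" and cL: "c \<in> \<Lambda>" and zL: "z \<in> \<Lambda>"
    using ab by (auto intro!: intv simp: y_def c_def z_def e_def field_simps)
  have ord: "a < y" "y < c - e" "c < z" "z < b" "0 < e" "c + e < b"
    using ab by (auto simp: y_def c_def z_def e_def field_simps)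
  define L where "L = restrict_space borel \<Lambda>"
  define prof where "prof P Q = (\<lambda>i\<in>{1..n}. if i = 1 then P else Q)" for P Q :: "real measure"
  have prof_in: "prof P Q \<in> profiles n \<Lambda>" if "P \<in> prob_measures \<Lambda>" "Q \<in> prob_measures \<Lambda>" for P Q
    using that unfolding prof_def profiles_def by auto
  have PM: "prob_space M" "sets M = sets L" if "M \<in> prob_measures \<Lambda>" for M
    using that unfolding prob_measures_def L_def by auto
  have psiPM: "\<psi> p \<in> prob_measures \<Lambda>" if "p \<in> profiles n \<Lambda>" for p
    using PAF that unfolding is_PAF_def by blast
  have setsle: "{x \<in> \<Lambda>. x \<le> t} \<in> sets L" for t
  proof -
    have "{x \<in> \<Lambda>. x \<le> t} = {..t} \<inter> \<Lambda>" by auto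
    then show ?thesis using sets_L[of "{..t}" \<Lambda>] unfolding L_def by simp
  qed
  have setsball: "ball u r \<inter> \<Lambda> \<in> sets L" for u r
    using sets_L[of "ball u r" \<Lambda>] unfolding L_def by simp
  define Da where "Da = mixm \<Lambda> 1 a b"
  define Db where "Db = mixm \<Lambda> 1 b a"
  have Da: "Da \<in> prob_measures \<Lambda>" and Db: "Db \<in> prob_measures \<Lambda>"
    unfolding Da_def Db_def using ab by (auto intro: mix_in)
  define A where "A = prof Da Db"
  have A: "A \<in> profiles n \<Lambda>" unfolding A_def using Da Db by (rule prof_in)
  define G where "G = \<psi> A"
  have G: "G \<in> prob_measures \<Lambda>" unfolding G_def using psiPM A .
  define s where "s = cdf_of \<Lambda> G y"
  have one: "1 \<in> {1..n}" "2 \<in> {1..n}" using assms(3) by auto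
  have "a \<in> supp \<Lambda> Da"
  proof -
    have "measure Da (ball a r \<inter> \<Lambda>) = 1" if "r > 0" for r
      unfolding Da_def using mix_measure[OF setsball[unfolded L_def, of a r] ab(1,2)] ab that by auto
    then show ?thesis unfolding supp_def using ab by auto
  qed
  moreover have "A 1 = Da" unfolding A_def prof_def using one by simp
  moreover have "(\<Union>i\<in>{1..n}. supp \<Lambda> (A i)) \<subseteq> supp \<Lambda> (\<psi> A)" using DIV A unfolding diversity_def by blast
  ultimately have "a \<in> supp \<Lambda> G" using one unfolding G_def by blast
  then have pos: "0 < measure G (ball a (y - a) \<inter> \<Lambda>)" using ord unfolding supp_def by auto
  interpret G: prob_space G using PM(1)[OF G] .
  have "measure G (ball a (y - a) \<inter> \<Lambda>) \<le> measure G {x \<in> \<Lambda>. x \<le> y}"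
    apply (rule G.finite_measure_mono)
    using ord by (auto simp: dist_real_def PM(2)[OF G] setsle)
  then have s0: "0 < s" using pos unfolding s_def cdf_of_def by linarith
  have s1: "s \<le> 1" unfolding s_def cdf_of_def by (rule G.prob_le_1)
  define P where "P = mixm \<Lambda> s a b"
  define Q where "Q = mixm \<Lambda> s c b"
  have P: "P \<in> prob_measures \<Lambda>" and Q: "Q \<in> prob_measures \<Lambda>"
    unfolding P_def Q_def using ab cL s0 s1 by (auto intro: mix_in)
  have cdfP: "cdf_of \<Lambda> P x = (if a \<le> x then s else 0) + (if b \<le> x then 1 - s else 0)" for x
    unfolding P_def using mix_cdf ab s0 s1 by simp
  have cdfQ: "cdf_of \<Lambda> Q x = (if c \<le> x then s else 0) + (if b \<le> x then 1 - s else 0)" for x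
    unfolding Q_def using mix_cdf[of c \<Lambda> b s] ab cL ord s0 s1 by simp
  have cdfDa: "cdf_of \<Lambda> Da x = (if a \<le> x then 1 else 0)" for x
    unfolding Da_def using mix_cdf[of a \<Lambda> b 1] ab by simp
  have cdfDb: "cdf_of \<Lambda> Db x = (if b \<le> x then 1 else 0)" for x
    unfolding Db_def using mix_cdf[of b \<Lambda> a 1] ab by simp
  define Z where "Z = prof P Q"
  define Z' where "Z' = prof P Db"
  have Z: "Z \<in> profiles n \<Lambda>" unfolding Z_def using P Q by (rule prof_in)
  have Z': "Z' \<in> profiles n \<Lambda>" unfolding Z'_def using P Db by (rule prof_in)
  have unDb: "Z'(1 := Db) = (\<lambda>i\<in>{1..n}. Db)"
    unfolding Z'_def prof_def using one by (auto simp: fun_eq_iff)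
  have unA: "Z'(1 := Da) = A"
    unfolding Z'_def A_def prof_def using one by (auto simp: fun_eq_iff)
  have psiDb: "\<psi> (\<lambda>i\<in>{1..n}. Db) = Db" using UN Db unfolding unanimous_def by blast
  have Z'1: "Z' 1 = P" unfolding Z'_def prof_def using one by simp
  have spa: "(cdf_of \<Lambda> (Z' 1) y < cdf_of \<Lambda> (\<psi> Z') y \<longrightarrow>
          cdf_of \<Lambda> (\<psi> Z') y \<le> cdf_of \<Lambda> (\<psi> (Z'(1 := Db))) y)"
    using SP Z' one Db yL unfolding level_SP_def by blast
  have spb: "(cdf_of \<Lambda> (Z' 1) y > cdf_of \<Lambda> (\<psi> Z') y \<longrightarrow>
          cdf_of \<Lambda> (\<psi> Z') y \<ge> cdf_of \<Lambda> (\<psi> (Z'(1 := Da))) y)"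
    using SP Z' one Da yL unfolding level_SP_def by blast
  have st1: "cdf_of \<Lambda> (\<psi> Z') y = s"
    using spa spb unfolding unDb unA psiDb Z'1 cdfP cdfDb
    using ord s0 unfolding s_def G_def by auto
  have "cdf_of \<Lambda> (\<psi> Z') y = cdf_of \<Lambda> (\<psi> Z) y"
    apply (rule chain[OF SP Z' Z yL])
    unfolding Z'_def Z_def prof_def using ord by (auto simp: cdfQ cdfDb)
  then have Fy: "cdf_of \<Lambda> (\<psi> Z) y = s" using st1 by simp
  have "cdf_of \<Lambda> (\<psi> Z) z = cdf_of \<Lambda> (\<psi> (\<lambda>i\<in>{1..n}. P)) z"
    apply (rule chain[OF SP Z _ zL])
    subgoal using P unfolding profiles_def by auto
    unfolding Z_def prof_def using ord by (auto simp: cdfQ cdfP)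
  also have "\<dots> = s" using UN P unfolding unanimous_def using ord by (simp add: cdfP)
  finally have Fz: "cdf_of \<Lambda> (\<psi> Z) z = s" .
  have "c \<in> supp \<Lambda> Q"
  proof -
    have "measure Q (ball c r \<inter> \<Lambda>) \<ge> s" if "r > 0" for r
    proof -
      have "c \<noteq> b" using ord by simp
      from mix_measure[OF setsball[unfolded L_def, of c r] cL ab(2) this s0[THEN less_imp_le] s1]
      have "measure Q (ball c r \<inter> \<Lambda>) = s + (if b \<in> ball c r \<inter> \<Lambda> then 1 - s else 0)"
        unfolding Q_def using that cL by simp
      then show ?thesis using s1 by (simp split: if_splits)
    qed
    then show ?thesis unfolding supp_def using cL s0 by (auto intro: less_le_trans)
  qed
  moreover have "Z 2 = Q" unfolding Z_def prof_def using one by simp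
  moreover have "(\<Union>i\<in>{1..n}. supp \<Lambda> (Z i)) \<subseteq> supp \<Lambda> (\<psi> Z)" using DIV Z unfolding diversity_def by blast
  ultimately have "c \<in> supp \<Lambda> (\<psi> Z)" using one by blast
  then have pos2: "0 < measure (\<psi> Z) (ball c e \<inter> \<Lambda>)" using ord unfolding supp_def by auto
  have FZ: "\<psi> Z \<in> prob_measures \<Lambda>" using psiPM Z .
  interpret F: prob_space "\<psi> Z" using PM(1)[OF FZ] .
  have "measure (\<psi> Z) (ball c e \<inter> \<Lambda>) \<le> measure (\<psi> Z) ({x \<in> \<Lambda>. x \<le> z} - {x \<in> \<Lambda>. x \<le> y})"
    apply (rule F.finite_measure_mono)
    using ord by (auto simp: dist_real_def PM(2)[OF FZ] setsle z_def)
  also have "\<dots> = measure (\<psi> Z) {x \<in> \<Lambda>. x \<le> z} - measure (\<psi> Z) {x \<in> \<Lambda>. x \<le> y}"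
    apply (rule F.finite_measure_Diff)
    using ord by (auto simp: PM(2)[OF FZ] setsle)
  also have "\<dots> = 0" using Fy Fz unfolding cdf_of_def by simp
  finally show False using pos2 by simp
qed

end
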